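(* Let $0<p\le\infty$ and $0<q_1<q_2\le\infty$. Then $\ell^{p,q_1}\hookrightarrow\ell^{p,q_2}$, and for all $a\in\ell^{p,q_1}$: 1. $\|a\|_{p,q_2}\le (q_1/p)^{1/q_1-1/q_2}\|a\|_{p,q_1}$ if $p<q_1$; 2. $\|a\|_{p,q_2}\le\|a\|_{p,q_1}$ if $p\ge q_1$.
   Context: For a scalar sequence $a=(a_n)$, its decreasing rearrangement is $a^*_n=\inf\{\omega>0:\#\{k:|a_k|>\omega\}\le n-1\}$. For $p,q\in(0,\infty]$, the Lorentz sequence space $\ell^{p,q}$ consists of all sequences $a$ with $\|a\|_{p,q}<\infty$, where $\|a\|_{p,q}=\big(\sum_{n=1}^\infty (a_n^* )^q n^{q/p-1}\big)^{1/q}$ if $q<\infty$, and $\|a\|_{p,\infty}=\sup_{n}n^{1/p}a_n^*$; convention $1/\infty=0$. $X\hookrightarrow Y$ means $X\subset Y$ as a linear subspace and there is $C\ge0$ with $\|a\|_Y\le C\|a\|_X$ for all $a\in X$. *)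

theory Defs
  imports "HOL-Analysis.Analysis"
begin

text \<open>Parameters p, q range over (0, infinity], modelled as ennreal with p > 0.
  Reciprocal with the convention 1/infinity = 0, as a real number.\<close>
definition inv_e :: "ennreal \<Rightarrow> real" where
  "inv_e x = (if x = (top::ennreal) then 0 else 1 / enn2real x)"

definition epow :: "ennreal \<Rightarrow> real \<Rightarrow> ennreal" where
  "epow x r = (if x = (top::ennreal) then (if r > 0 then (top::ennreal) else if r = 0 then 1 else 0)
               else ennreal (enn2real x powr r))"

text \<open>Decreasing rearrangement a^*_n for n >= 1 (the sequence a is indexed by nat;
  the index set is irrelevant for counting). Infimum of the empty set is infinity.\<close>
definition dec_rearr :: "(nat \<Rightarrow> complex) \<Rightarrow> nat \<Rightarrow> ennreal" where
  "dec_rearr a n = Inf {ennreal w | w. w > 0 \<and> finite {k. norm (a k) > w}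
                                     \<and> card {k. norm (a k) > w} \<le> n - 1}"

definition lorentz_norm :: "ennreal \<Rightarrow> ennreal \<Rightarrow> (nat \<Rightarrow> complex) \<Rightarrow> ennreal" where
  "lorentz_norm p q a =
     (if q = (top::ennreal) then (SUP n\<in>{1..}. ennreal (real n powr inv_e p) * dec_rearr a n)
      else epow (\<Sum>n. epow (dec_rearr a (Suc n)) (enn2real q)
                        * ennreal (real (Suc n) powr (enn2real q * inv_e p - 1)))
                (1 / enn2real q))"

definition lorentz_space :: "ennreal \<Rightarrow> ennreal \<Rightarrow> (nat \<Rightarrow> complex) set" where
  "lorentz_space p q = {a. lorentz_norm p q a < (top::ennreal)}"

definition lorentz_embeds :: "ennreal \<Rightarrow> ennreal \<Rightarrow> ennreal \<Rightarrow> ennreal \<Rightarrow> bool" where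
  "lorentz_embeds p1 q1 p2 q2 \<longleftrightarrow>
     lorentz_space p1 q1 \<subseteq> lorentz_space p2 q2 \<and>
     (\<exists>C::real. C \<ge> 0 \<and> (\<forall>a\<in>lorentz_space p1 q1.
        lorentz_norm p2 q2 a \<le> ennreal C * lorentz_norm p1 q1 a))"

end

theory Submission
  imports Defs
begin

lemma powr_step:
  fixes r :: real and n :: nat
  assumes "r > 1" "n \<ge> 1"
  shows "real (Suc n) powr r - real n powr r \<le> r * real (Suc n) powr (r - 1)"
proof -
  have "real n < real (Suc n)" by simp
  have "\<exists>z. real n < z \<and> z < real (Suc n) \<and> real (Suc n) powr r - real n powr r = (real (Suc n) - real n) * (r * z powr (r - 1))"
    using assms by (intro MVT2[of "real n" "real (Suc n)" "\<lambda>x. x powr r" "\<lambda>x. r * x powr (r - 1)"] has_real_derivative_powr) auto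
  then obtain z where z: "real n < z" "z < real (Suc n)"
    "real (Suc n) powr r - real n powr r = (real (Suc n) - real n) * (r * z powr (r - 1))"
    by blast
  have "z powr (r - 1) \<le> real (Suc n) powr (r - 1)"
    using z assms by (intro powr_mono2) auto
  then show ?thesis using z assms by simp
qed

lemma sum_powr_lower:
  fixes r :: real and n :: nat
  assumes "r \<ge> 0" "n \<ge> 1"
  shows "real n powr r \<le> max 1 r * (\<Sum>k<n. real (Suc k) powr (r - 1))"
proof (cases "r \<le> 1")
  case True
  have "(\<Sum>k<n. real n powr (r - 1)) \<le> (\<Sum>k<n. real (Suc k) powr (r - 1))"
  proof (rule sum_mono)
    fix k assume "k \<in> {..<n}"
    then show "real n powr (r - 1) \<le> real (Suc k) powr (r - 1)"
      using True by (intro powr_mono2') auto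
  qed
  moreover have "(\<Sum>k<n. real n powr (r - 1)) = real n powr r"
    using assms by (simp add: powr_diff)
  ultimately show ?thesis using True by simp
next
  case False
  have "real n powr r \<le> r * (\<Sum>k<n. real (Suc k) powr (r - 1))" using assms(2)
  proof (induction n rule: dec_induct)
    case base
    then show ?case using False by simp
  next
    case (step n)
    have "real (Suc n) powr r \<le> real n powr r + r * real (Suc n) powr (r - 1)"
      using powr_step[of r n] False step by simp
    also have "\<dots> \<le> r * (\<Sum>k<Suc n. real (Suc k) powr (r - 1))"
      using step by (simp add: algebra_simps)
    finally show ?case .
  qed
  then show ?thesis using False by simp
qed

lemma core1:
  fixes d :: "nat \<Rightarrow> real" and ip Q :: real and n :: nat
  assumes d0: "\<And>n. 0 \<le> d n" and mono: "\<And>m n. m \<le> n \<Longrightarrow> d n \<le> d m"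
    and ip: "ip \<ge> 0" and Q: "Q > 0"
    and summ: "summable (\<lambda>n. d (Suc n) powr Q * real (Suc n) powr (Q*ip - 1))"
    and n: "n \<ge> 1"
  shows "real n powr ip * d n \<le> max 1 (Q*ip) powr (1/Q) *
           (\<Sum>n. d (Suc n) powr Q * real (Suc n) powr (Q*ip - 1)) powr (1/Q)"
proof -
  define f where "f = (\<lambda>n. d (Suc n) powr Q * real (Suc n) powr (Q*ip - 1))"
  define s where "s = suminf f"
  define r where "r = Q * ip"
  define c where "c = max 1 r"
  have f0: "\<And>k. 0 \<le> f k" unfolding f_def by simp
  have sf: "summable f" using summ unfolding f_def .
  have s0: "0 \<le> s" unfolding s_def using f0 sf by (simp add: suminf_nonneg)
  have c1: "c \<ge> 1" unfolding c_def by simp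
  have "(\<Sum>k<n. f k) \<le> s" unfolding s_def using sf f0 by (intro sum_le_suminf) auto
  moreover have "d n powr Q * (\<Sum>k<n. real (Suc k) powr (r-1)) \<le> (\<Sum>k<n. f k)"
    unfolding sum_distrib_left
  proof (rule sum_mono)
    fix k assume "k \<in> {..<n}"
    then have "d n \<le> d (Suc k)" by (intro mono) auto
    then have "d n powr Q \<le> d (Suc k) powr Q" using d0 Q by (intro powr_mono2) auto
    then show "d n powr Q * real (Suc k) powr (r - 1) \<le> f k"
      unfolding f_def r_def by (intro mult_right_mono) auto
  qed
  moreover have "real n powr r \<le> c * (\<Sum>k<n. real (Suc k) powr (r - 1))"
    unfolding c_def using sum_powr_lower[of r n] ip Q n r_def by simp
  ultimately have key: "d n powr Q * real n powr r \<le> c * s"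
  proof -
    assume a: "(\<Sum>k<n. f k) \<le> s" "d n powr Q * (\<Sum>k<n. real (Suc k) powr (r-1)) \<le> (\<Sum>k<n. f k)"
      "real n powr r \<le> c * (\<Sum>k<n. real (Suc k) powr (r - 1))"
    have "d n powr Q * real n powr r \<le> d n powr Q * (c * (\<Sum>k<n. real (Suc k) powr (r - 1)))"
      using a(3) by (intro mult_left_mono) auto
    also have "\<dots> = c * (d n powr Q * (\<Sum>k<n. real (Suc k) powr (r - 1)))" by simp
    also have "\<dots> \<le> c * s" using a(1,2) c1 by (intro mult_left_mono) auto
    finally show ?thesis .
  qed
  have "(d n powr Q * real n powr r) powr (1/Q) \<le> (c * s) powr (1/Q)"
    using key Q by (intro powr_mono2) auto
  moreover have "(d n powr Q * real n powr r) powr (1/Q) = real n powr ip * d n"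
    using Q d0[of n] by (simp add: powr_mult powr_powr r_def)
  moreover have "(c * s) powr (1/Q) = c powr (1/Q) * s powr (1/Q)"
    using c1 s0 by (simp add: powr_mult)
  ultimately show ?thesis unfolding c_def r_def s_def f_def by simp
qed

lemma core2:
  fixes d :: "nat \<Rightarrow> real" and ip Q Q2 :: real
  assumes d0: "\<And>n. 0 \<le> d n" and mono: "\<And>m n. m \<le> n \<Longrightarrow> d n \<le> d m"
    and ip: "ip \<ge> 0" and Q: "Q > 0" and Q2: "Q2 > Q"
    and summ: "summable (\<lambda>n. d (Suc n) powr Q * real (Suc n) powr (Q*ip - 1))"
  shows "summable (\<lambda>n. d (Suc n) powr Q2 * real (Suc n) powr (Q2*ip - 1)) \<and>
         (\<Sum>n. d (Suc n) powr Q2 * real (Suc n) powr (Q2*ip - 1)) powr (1/Q2) \<le>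
           max 1 (Q*ip) powr (1/Q - 1/Q2) *
           (\<Sum>n. d (Suc n) powr Q * real (Suc n) powr (Q*ip - 1)) powr (1/Q)"
proof -
  define f where "f = (\<lambda>n. d (Suc n) powr Q * real (Suc n) powr (Q*ip - 1))"
  define g where "g = (\<lambda>n. d (Suc n) powr Q2 * real (Suc n) powr (Q2*ip - 1))"
  define s where "s = suminf f"
  define c where "c = max 1 (Q*ip)"
  define B where "B = c powr (1/Q) * s powr (1/Q)"
  have f0: "\<And>k. 0 \<le> f k" unfolding f_def by simp
  have g0: "\<And>k. 0 \<le> g k" unfolding g_def by simp
  have sf: "summable f" using summ unfolding f_def .
  have s0: "0 \<le> s" unfolding s_def using f0 sf by (simp add: suminf_nonneg)
  have c1: "c \<ge> 1" unfolding c_def by simp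
  have B0: "B \<ge> 0" unfolding B_def by simp
  have gle: "g n \<le> f n * B powr (Q2 - Q)" for n
  proof (cases "d (Suc n) = 0")
    case True
    then show ?thesis unfolding g_def using f0 by simp
  next
    case False
    define m where "m = real (Suc n)"
    have m0: "m > 0" unfolding m_def by simp
    have dp: "d (Suc n) > 0" using False d0[of "Suc n"] by simp
    have b1: "m powr ip * d (Suc n) \<le> B"
      using core1[of d ip Q "Suc n", OF d0 mono ip Q summ] unfolding B_def c_def s_def f_def m_def
      by simp
    have b2: "(m powr ip * d (Suc n)) powr (Q2 - Q) \<le> B powr (Q2 - Q)"
      using b1 Q2 m0 dp by (intro powr_mono2) auto
    have "f n * (m powr ip * d (Suc n)) powr (Q2 - Q)
        = (d (Suc n) powr Q * d (Suc n) powr (Q2 - Q)) * (m powr (Q*ip - 1) * m powr (ip * (Q2 - Q)))"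
      unfolding f_def m_def[symmetric] using m0 dp by (simp add: powr_mult powr_powr)
    also have "\<dots> = d (Suc n) powr (Q + (Q2 - Q)) * m powr (Q*ip - 1 + ip * (Q2 - Q))"
      by (simp only: powr_add)
    also have "\<dots> = g n"
      unfolding g_def m_def by (simp add: algebra_simps)
    finally show ?thesis using b2 f0[of n] by (metis mult_left_mono)
  qed
  have sK: "summable (\<lambda>n. f n * B powr (Q2 - Q))" using sf by (rule summable_mult2)
  have sg: "summable g"
    by (rule summable_comparison_test[OF _ sK]) (use gle g0 in auto)
  have "suminf g \<le> (\<Sum>n. f n * B powr (Q2 - Q))"
    by (rule suminf_le[OF gle sg sK])
  also have "\<dots> = s * B powr (Q2 - Q)" unfolding s_def using sf by (rule suminf_mult2[symmetric])
  finally have sgle: "suminf g \<le> s * B powr (Q2 - Q)" .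
  have "(suminf g) powr (1/Q2) \<le> (s * B powr (Q2 - Q)) powr (1/Q2)"
    using sgle Q Q2 g0 sg by (intro powr_mono2) (auto simp: suminf_nonneg)
  also have "s * B powr (Q2 - Q) = c powr ((Q2 - Q)/Q) * (s powr 1 * s powr ((Q2 - Q)/Q))"
    unfolding B_def using c1 s0 by (simp add: powr_mult powr_powr)
  also have "\<dots> = c powr ((Q2 - Q)/Q) * s powr (Q2/Q)"
  proof -
    have "s powr 1 * s powr ((Q2 - Q)/Q) = s powr (1 + (Q2 - Q)/Q)" by (simp only: powr_add)
    also have "1 + (Q2 - Q)/Q = Q2/Q" using Q by (simp add: field_simps)
    finally show ?thesis by simp
  qed
  also have "(c powr ((Q2 - Q)/Q) * s powr (Q2/Q)) powr (1/Q2) = c powr ((Q2 - Q)/Q/Q2) * s powr (1/Q)"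
    using c1 s0 Q Q2 by (simp add: powr_mult powr_powr)
  also have "(Q2 - Q)/Q/Q2 = 1/Q - 1/Q2" using Q Q2 by (simp add: field_simps)
  finally show ?thesis using sg unfolding g_def f_def s_def c_def by simp
qed

lemma epow_ennreal: "x \<ge> 0 \<Longrightarrow> epow (ennreal x) r = ennreal (x powr r)"
  by (simp add: epow_def)

lemma epow_top: "r > 0 \<Longrightarrow> epow top r = top"
  by (simp add: epow_def)

lemma dec_mono: "m \<le> n \<Longrightarrow> dec_rearr a n \<le> dec_rearr a m"
  unfolding dec_rearr_def by (rule Inf_superset_mono) auto

lemma dec0: "dec_rearr a 0 = dec_rearr a (Suc 0)"
  by (simp add: dec_rearr_def)

lemma bound:
  assumes p: "0 < p" and q1: "0 < q1" and q12: "q1 < q2" and a: "a \<in> lorentz_space p q1"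
  shows "lorentz_norm p q2 a \<le>
    ennreal (max 1 (enn2real q1 * inv_e p) powr (1/enn2real q1 - inv_e q2)) * lorentz_norm p q1 a"
proof -
  define Q1 where "Q1 = enn2real q1"
  define ip where "ip = inv_e p"
  have q1t: "q1 \<noteq> top" using q12 by (metis less_le_trans top_greatest less_irrefl)
  have Q1: "Q1 > 0" unfolding Q1_def using q1 q1t by (simp add: enn2real_positive_iff less_top)
  have q1e: "q1 = ennreal Q1" unfolding Q1_def using q1t by (metis ennreal_enn2real less_top)
  have ip0: "ip \<ge> 0" unfolding ip_def inv_e_def by simp
  define T where "T = (\<lambda>n. epow (dec_rearr a (Suc n)) Q1 * ennreal (real (Suc n) powr (Q1 * ip - 1)))"
  have L1: "lorentz_norm p q1 a = epow (suminf T) (1 / Q1)"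
    unfolding lorentz_norm_def T_def Q1_def ip_def using q1t by simp
  have Lfin: "lorentz_norm p q1 a < top" using a unfolding lorentz_space_def by simp
  have Tfin: "suminf T < top"
  proof (rule ccontr)
    assume "\<not> suminf T < top"
    then have "suminf T = top" using top.not_eq_extremum by blast
    then have "lorentz_norm p q1 a = top" unfolding L1 using Q1 by (simp add: epow_top)
    then show False using Lfin by simp
  qed
  have dfinS: "dec_rearr a (Suc n) < top" for n
  proof (rule ccontr)
    assume "\<not> dec_rearr a (Suc n) < top"
    then have "dec_rearr a (Suc n) = top" using top.not_eq_extremum by blast
    then have "T n = top" unfolding T_def using Q1 by (simp add: epow_top)
    moreover have "T n < top" using Tfin by (rule ennreal_suminf_lessD)
    ultimately show False by simp
  qed
  have dfin: "dec_rearr a n < top" for n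
    using dfinS[of "n - 1"] dfinS[of 0] dec0[of a] by (cases "n = 0") auto
  define d where "d = (\<lambda>n. enn2real (dec_rearr a n))"
  have de: "dec_rearr a n = ennreal (d n)" for n
    unfolding d_def using dfin[of n] by simp
  have d0: "\<And>n. 0 \<le> d n" unfolding d_def by simp
  have dmono: "\<And>m n. m \<le> n \<Longrightarrow> d n \<le> d m"
    unfolding d_def using dfin by (intro enn2real_mono dec_mono) auto
  define f where "f = (\<lambda>n. d (Suc n) powr Q1 * real (Suc n) powr (Q1*ip - 1))"
  have f0: "\<And>n. 0 \<le> f n" unfolding f_def by simp
  have Tf: "T = (\<lambda>n. ennreal (f n))"
    unfolding T_def f_def de using d0 by (intro ext) (simp add: epow_ennreal ennreal_mult)
  have sf: "summable f"
    using Tfin unfolding Tf by (intro summable_suminf_not_top f0) simp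
  have summ: "summable (\<lambda>n. d (Suc n) powr Q1 * real (Suc n) powr (Q1*ip - 1))"
    using sf unfolding f_def .
  have L1': "lorentz_norm p q1 a = ennreal (suminf f powr (1/Q1))"
    unfolding L1 Tf using f0 sf by (simp add: suminf_ennreal2 epow_ennreal suminf_nonneg)
  define c where "c = max 1 (Q1 * ip)"
  show ?thesis
  proof (cases "q2 = top")
    case True
    have iq2: "inv_e q2 = 0" unfolding inv_e_def using True by simp
    have "lorentz_norm p q2 a = (SUP n\<in>{1..}. ennreal (real n powr ip) * dec_rearr a n)"
      unfolding lorentz_norm_def ip_def using True by simp
    also have "\<dots> \<le> ennreal (c powr (1/Q1) * suminf f powr (1/Q1))"
    proof (rule SUP_least)
      fix n :: nat assume "n \<in> {1..}"
      then have "real n powr ip * d n \<le> c powr (1/Q1) * suminf f powr (1/Q1)"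
        using core1[of d ip Q1 n, OF d0 dmono ip0 Q1 summ] unfolding c_def f_def by simp
      then show "ennreal (real n powr ip) * dec_rearr a n \<le> ennreal (c powr (1/Q1) * suminf f powr (1/Q1))"
        unfolding de using d0 by (simp add: ennreal_mult[symmetric] ennreal_leI)
    qed
    finally show ?thesis unfolding L1' iq2 c_def Q1_def ip_def
      by (simp add: ennreal_mult[symmetric])
  next
    case False
    define Q2 where "Q2 = enn2real q2"
    have q2e: "q2 = ennreal Q2" unfolding Q2_def using False by (metis ennreal_enn2real less_top)
    have Q2: "Q2 > Q1" using q12 Q1 unfolding q1e q2e
      by (simp add: ennreal_less_iff)
    have iq2: "inv_e q2 = 1 / Q2" unfolding inv_e_def Q2_def using False by simp
    define g where "g = (\<lambda>n. d (Suc n) powr Q2 * real (Suc n) powr (Q2*ip - 1))"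
    have g0: "\<And>n. 0 \<le> g n" unfolding g_def by simp
    from core2[of d ip Q1 Q2, OF d0 dmono ip0 Q1 Q2 summ]
    have sg: "summable g" and gle: "suminf g powr (1/Q2) \<le> c powr (1/Q1 - 1/Q2) * suminf f powr (1/Q1)"
      unfolding g_def f_def c_def by auto
    have "lorentz_norm p q2 a = epow (\<Sum>n. ennreal (g n)) (1 / Q2)"
      unfolding lorentz_norm_def g_def de Q2_def ip_def using False d0
      by (simp add: epow_ennreal ennreal_mult)
    also have "\<dots> = ennreal (suminf g powr (1/Q2))"
      using g0 sg by (simp add: suminf_ennreal2 epow_ennreal suminf_nonneg)
    also have "\<dots> \<le> ennreal (c powr (1/Q1 - 1/Q2) * suminf f powr (1/Q1))"
      using gle by (rule ennreal_leI)
    finally show ?thesis unfolding L1' iq2 c_def Q1_def ip_def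
      by (simp add: ennreal_mult[symmetric])
  qed
qed


theorem mainTheorem7:
  fixes p q1 q2 :: ennreal
  assumes "0 < p" and "0 < q1" and "q1 < q2"
  shows "lorentz_embeds p q1 p q2 \<and>
         (\<forall>a\<in>lorentz_space p q1.
            (p < q1 \<longrightarrow> lorentz_norm p q2 a \<le>
               ennreal ((enn2real q1 / enn2real p) powr (1 / enn2real q1 - inv_e q2))
                 * lorentz_norm p q1 a) \<and>
            (q1 \<le> p \<longrightarrow> lorentz_norm p q2 a \<le> lorentz_norm p q1 a))"
proof -
  define C where "C = max 1 (enn2real q1 * inv_e p) powr (1/enn2real q1 - inv_e q2)"
  have C0: "C \<ge> 0" unfolding C_def by simp
  have B: "lorentz_norm p q2 a \<le> ennreal C * lorentz_norm p q1 a" if "a \<in> lorentz_space p q1" for a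
    using bound[OF assms that] unfolding C_def .
  have sub: "lorentz_space p q1 \<subseteq> lorentz_space p q2"
  proof
    fix a assume a: "a \<in> lorentz_space p q1"
    have "ennreal C * lorentz_norm p q1 a < top"
      using a unfolding lorentz_space_def by (simp add: ennreal_mult_less_top)
    then show "a \<in> lorentz_space p q2"
      using B[OF a] unfolding lorentz_space_def by (simp add: le_less_trans)
  qed
  have emb: "lorentz_embeds p q1 p q2"
    unfolding lorentz_embeds_def using sub C0 B by blast
  have q1t: "q1 \<noteq> top" using assms(3) by (metis less_le_trans top_greatest less_irrefl)
  define Q1 where "Q1 = enn2real q1"
  have q1e: "q1 = ennreal Q1" unfolding Q1_def using q1t by (metis ennreal_enn2real less_top)
  have Q1: "Q1 > 0" unfolding Q1_def using assms(2) q1t by (simp add: enn2real_positive_iff less_top)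
  have c1: "p < q1 \<Longrightarrow> max 1 (enn2real q1 * inv_e p) = enn2real q1 / enn2real p"
  proof -
    assume pq: "p < q1"
    have pt: "p \<noteq> top" using pq q1t by (metis less_le_trans top_greatest less_irrefl)
    define P where "P = enn2real p"
    have pe: "p = ennreal P" unfolding P_def using pt by (metis ennreal_enn2real less_top)
    have P: "P > 0" unfolding P_def using assms(1) pt by (simp add: enn2real_positive_iff less_top)
    have "P < Q1" using pq P Q1 unfolding pe q1e by (simp add: ennreal_less_iff)
    then have "Q1 / P > 1" using P by simp
    moreover have "inv_e p = 1 / P" unfolding inv_e_def P_def using pt by simp
    ultimately show ?thesis unfolding Q1_def[symmetric] P_def[symmetric] by simp
  qed
  have c2: "q1 \<le> p \<Longrightarrow> max 1 (enn2real q1 * inv_e p) = 1"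
  proof -
    assume pq: "q1 \<le> p"
    show ?thesis
    proof (cases "p = top")
      case True
      then show ?thesis unfolding inv_e_def by simp
    next
      case pt: False
      define P where "P = enn2real p"
      have pe: "p = ennreal P" unfolding P_def using pt by (metis ennreal_enn2real less_top)
      have P: "P > 0" unfolding P_def using assms(1) pt by (simp add: enn2real_positive_iff less_top)
      have "Q1 \<le> P" using pq P Q1 unfolding pe q1e by (simp add: ennreal_le_iff)
      then have "Q1 / P \<le> 1" using P by simp
      moreover have "inv_e p = 1 / P" unfolding inv_e_def P_def using pt by simp
      ultimately show ?thesis unfolding Q1_def[symmetric] P_def[symmetric] by simp
    qed
  qed
  show ?thesis
  proof (intro conjI emb ballI impI)
    fix a assume a: "a \<in> lorentz_space p q1"
    {
      assume "p < q1"
      then show "lorentz_norm p q2 a \<le>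
               ennreal ((enn2real q1 / enn2real p) powr (1 / enn2real q1 - inv_e q2))
                 * lorentz_norm p q1 a"
        using B[OF a] c1 unfolding C_def by simp
    }
    {
      assume "q1 \<le> p"
      then show "lorentz_norm p q2 a \<le> lorentz_norm p q1 a"
        using B[OF a] c2 unfolding C_def by simp
    }
  qed
qed

end
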